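(* Let $S\in\mathbb{R}^{n\times n}$, $n=2m$, be nonsingular and skew-symmetric with eigenvalues $\pm\mathrm{i}\sigma_j$, $j=1,\ldots,m$, where $\sigma_1>\sigma_2\ge\cdots\ge\sigma_m>0$, and let $u_j,v_j\in\mathbb{R}^n$ be such that $\{u_1,\ldots,u_m,v_1,\ldots,v_m\}$ is an orthonormal basis of $\mathbb{R}^n$ and $\frac{\sqrt2}{2}(u_j\pm\mathrm{i}v_j)$ are eigenvectors of $S$ for $\pm\mathrm{i}\sigma_j$ (equivalently $Sv_j=\sigma_ju_j$, $Su_j=-\sigma_jv_j$). Let $q_0\in\mathbb{R}^n$ be a unit vector written as $$q_0=\sum_{i=1}^m\big[\alpha_i(u_i+\mathrm{i}v_i)+\bar\alpha_i(u_i-\mathrm{i}v_i)\big]=2\sum_{i=1}^m(\alpha_{i,1}u_i-\alpha_{i,2}v_i),$$ with $\alpha_i=\alpha_{i,1}+\mathrm{i}\alpha_{i,2}$, and assume $\alpha_1\neq0$. Define $q_{2k+1}=Sq_{2k}/\|Sq_{2k}\|$, $q_{2k+2}=-Sq_{2k+1}/\|Sq_{2k+1}\|$ and $\rho_k=q_{2k+1}^TSq_{2k+2}$ for $k=0,1,\ldots$. Set $$x_o=\frac{-1}{|\alpha_1|}(\alpha_{1,1}v_1+\alpha_{1,2}u_1),\qquad x_e=\frac{1}{|\alpha_1|}(\alpha_{1,1}u_1-\alpha_{1,2}v_1).$$ Then $x_o,x_e$ are orthonormal, $\frac{\sqrt2}{2}(x_o\pm\mathrm{i}x_e)$ are unit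 eigenvectors of $S$ for the eigenvalues $\pm\mathrm{i}\sigma_1$, and for all $k\ge1$: $$|\tan\angle(q_{2k},x_e)|\le\Big(\frac{\sigma_2}{\sigma_1}\Big)^{2k}|\tan\angle(q_0,x_e)|,$$ $$|\tan\angle(q_{2k-1},x_o)|\le\Big(\frac{\sigma_2}{\sigma_1}\Big)^{2(k-1)}|\tan\angle(Sq_0,x_o)|,$$ $$|\tan\angle(q_{2k-1},x_o)|\le\Big(\frac{\sigma_2}{\sigma_1}\Big)^{2k-1}|\tan\angle(q_0,x_e)|.$$ Moreover, $$|\rho_k-\sigma_1|\le\frac12\tan^2\angle(q_{2k+1},x_o)\,\sigma_1+O\big(\tan^4\angle(q_{2k+1},x_o)\big)=O\Big(\Big(\frac{\sigma_2}{\sigma_1}\Big)^{4k}\Big).$$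
   Context: $\|\cdot\|$ is the Euclidean norm; $\angle(x,y)$ denotes the acute angle between real vectors $x,y$, i.e. $\cos\angle(x,y)=|x^Ty|/(\|x\|\|y\|)$. The iteration defining $q_k$ and $\rho_k$ is the skew-symmetric power (SSP) method, which alternately applies $S$ and $S^T=-S$ with normalization. *)

theory Defs
  imports "HOL-Analysis.Analysis" "HOL-Library.Landau_Symbols"
begin

definition vangle :: "real^'n \<Rightarrow> real^'n \<Rightarrow> real" where
  "vangle x y = arccos (\<bar>x \<bullet> y\<bar> / (norm x * norm y))"

fun ssp :: "real^'n^'n \<Rightarrow> real^'n \<Rightarrow> nat \<Rightarrow> real^'n" where
  "ssp S q0 0 = q0"
| "ssp S q0 (Suc j) =
     (if even j then 1 else -1) *\<^sub>R ((1 / norm (S *v ssp S q0 j)) *\<^sub>R (S *v ssp S q0 j))"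

definition ssp_rho :: "real^'n^'n \<Rightarrow> real^'n \<Rightarrow> nat \<Rightarrow> real" where
  "ssp_rho S q0 k = ssp S q0 (2*k+1) \<bullet> (S *v ssp S q0 (2*k+2))"

definition cmat :: "real^'n^'n \<Rightarrow> complex^'n^'n" where
  "cmat S = (\<chi> i j. complex_of_real (S $ i $ j))"

definition cvec :: "real^'n \<Rightarrow> real^'n \<Rightarrow> complex^'n" where
  "cvec x y = (\<chi> i. Complex (x $ i) (y $ i))"

end

theory Submission
  imports Defs
begin


locale sspl =
  fixes S :: "real^'n^'n" and m :: nat and \<sigma> :: "nat \<Rightarrow> real" and u v :: "nat \<Rightarrow> real^'n"
  assumes orth_uu: "\<forall>i\<in>{1..m}. \<forall>j\<in>{1..m}. u i \<bullet> u j = (if i = j then 1 else 0)"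
    and orth_vv: "\<forall>i\<in>{1..m}. \<forall>j\<in>{1..m}. v i \<bullet> v j = (if i = j then 1 else 0)"
    and orth_uv: "\<forall>i\<in>{1..m}. \<forall>j\<in>{1..m}. u i \<bullet> v j = 0"
    and eig_v: "\<forall>j\<in>{1..m}. S *v v j = \<sigma> j *\<^sub>R u j"
    and eig_u: "\<forall>j\<in>{1..m}. S *v u j = - (\<sigma> j *\<^sub>R v j)"
begin

definition vc :: "(nat \<Rightarrow> real) \<Rightarrow> (nat \<Rightarrow> real) \<Rightarrow> real^'n" where
  "vc A B = (\<Sum>i\<in>{1..m}. A i *\<^sub>R u i + B i *\<^sub>R v i)"

lemma S_vc: "S *v vc A B = vc (\<lambda>i. \<sigma> i * B i) (\<lambda>i. - \<sigma> i * A i)"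
proof -
  have lin: "linear (\<lambda>x. S *v x)" by simp
  have "S *v vc A B = (\<Sum>i\<in>{1..m}. A i *\<^sub>R (S *v u i) + B i *\<^sub>R (S *v v i))"
    unfolding vc_def by (simp add: linear_sum[OF lin] linear_add[OF lin] linear_scale[OF lin])
  also have "\<dots> = vc (\<lambda>i. \<sigma> i * B i) (\<lambda>i. - \<sigma> i * A i)"
    unfolding vc_def
    by (rule sum.cong) (use eig_u eig_v in \<open>auto simp: algebra_simps\<close>)
  finally show ?thesis .
qed

lemma u_vc: "i \<in> {1..m} \<Longrightarrow> u i \<bullet> vc C D = C i"
proof -
  assume i: "i \<in> {1..m}"
  have "u i \<bullet> vc C D = (\<Sum>j\<in>{1..m}. if j = i then C j else 0)"
    unfolding vc_def inner_sum_right
    by (rule sum.cong) (use i orth_uu orth_uv in \<open>auto simp: inner_add_right\<close>)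
  also have "\<dots> = C i" using i by simp
  finally show ?thesis .
qed

lemma v_vc: "i \<in> {1..m} \<Longrightarrow> v i \<bullet> vc C D = D i"
proof -
  assume i: "i \<in> {1..m}"
  have "v i \<bullet> vc C D = (\<Sum>j\<in>{1..m}. if j = i then D j else 0)"
    unfolding vc_def inner_sum_right
    by (rule sum.cong) (use i orth_vv orth_uv in \<open>auto simp: inner_add_right inner_commute\<close>)
  also have "\<dots> = D i" using i by simp
  finally show ?thesis .
qed

lemma vc_inner: "vc A B \<bullet> vc C D = (\<Sum>i\<in>{1..m}. A i * C i + B i * D i)"
proof -
  have "vc A B \<bullet> vc C D = (\<Sum>i\<in>{1..m}. A i * (u i \<bullet> vc C D) + B i * (v i \<bullet> vc C D))"
    by (simp only: vc_def[of A B] inner_sum_left inner_add_left inner_scaleR_left)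
  also have "\<dots> = (\<Sum>i\<in>{1..m}. A i * C i + B i * D i)"
    by (rule sum.cong) (auto simp: u_vc v_vc)
  finally show ?thesis .
qed

lemma vc_norm2: "(norm (vc A B))^2 = (\<Sum>i\<in>{1..m}. (A i)^2 + (B i)^2)"
  by (simp only: power2_norm_eq_inner vc_inner) (simp add: power2_eq_square)

end

lemma tan_vangle:
  fixes x y :: "real^'n"
  assumes y: "norm y = 1" and d: "x \<bullet> y = d" and dpos: "d > 0"
  shows "tan (vangle x y) = sqrt ((norm x)^2 - d^2) / d"
proof -
  have cs: "d \<le> norm x" using norm_cauchy_schwarz[of x y] y d by simp
  hence nx: "norm x > 0" using dpos by linarith
  define c where "c = d / norm x"
  have c0: "0 < c" and c1: "c \<le> 1" using nx dpos cs by (auto simp: c_def)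
  have va: "vangle x y = arccos c" unfolding vangle_def c_def using y d dpos by simp
  have "tan (vangle x y) = sqrt (1 - c^2) / c"
    unfolding va tan_def using c0 c1 by (simp add: sin_arccos cos_arccos)
  also have "1 - c^2 = ((norm x)^2 - d^2) / (norm x)^2" using nx by (simp add: c_def field_simps)
  also have "sqrt (((norm x)^2 - d^2) / (norm x)^2) = sqrt ((norm x)^2 - d^2) / norm x"
    using nx by (simp add: real_sqrt_divide)
  finally show ?thesis using nx by (simp add: c_def)
qed

lemma vangle_scale:
  fixes x y :: "real^'n"
  assumes "c > 0"
  shows "vangle (c *\<^sub>R x) y = vangle x y"
  unfolding vangle_def using assms by (simp add: abs_mult)

context sspl begin

lemma vc_scale: "c *\<^sub>R vc A B = vc (\<lambda>i. c * A i) (\<lambda>i. c * B i)"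
  unfolding vc_def by (simp add: scaleR_sum_right algebra_simps)

end

locale sspl2 = sspl +
  fixes a1 a2 :: "nat \<Rightarrow> real"
  assumes m2: "2 \<le> m"
    and sig12: "\<sigma> 2 < \<sigma> 1"
    and sigmono: "\<forall>j. 2 \<le> j \<and> j < m \<longrightarrow> \<sigma> (j+1) \<le> \<sigma> j"
    and sigpos: "\<forall>j\<in>{1..m}. 0 < \<sigma> j"
    and alpha1: "(a1 1, a2 1) \<noteq> (0, 0)"
begin

definition "w i = (a1 i)^2 + (a2 i)^2"
definition "r = sqrt (w 1)"
definition "Ac j i = (if even j then \<sigma> i ^ j * (2 * a1 i) else \<sigma> i ^ j * (- 2 * a2 i))"
definition "Bc j i = (if even j then \<sigma> i ^ j * (- 2 * a2 i) else - (\<sigma> i ^ j * (2 * a1 i)))"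
definition "V j = vc (Ac j) (Bc j)"
definition "X j = (\<Sum>i\<in>{2..m}. \<sigma> i ^ (2*j) * w i)"
definition "T j = sqrt (X j) / (\<sigma> 1 ^ j * r)"
definition "ye = (1 / r) *\<^sub>R (a1 1 *\<^sub>R u 1 - a2 1 *\<^sub>R v 1)"
definition "yo = (-1 / r) *\<^sub>R (a1 1 *\<^sub>R v 1 + a2 1 *\<^sub>R u 1)"

lemma w_nonneg: "w i \<ge> 0" by (simp add: w_def)
lemma w1_pos: "w 1 > 0"
  using alpha1 by (simp add: w_def sum_power2_gt_zero_iff)
lemma r_pos: "r > 0" using w1_pos by (simp add: r_def)
lemma r_sq: "r^2 = w 1" using w1_pos by (simp add: r_def)
lemma sig1_pos: "\<sigma> 1 > 0" using sigpos m2 by auto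
lemma sig2_pos: "\<sigma> 2 > 0" using sigpos m2 by auto

lemma sig_le2: "2 \<le> i \<Longrightarrow> i \<le> m \<Longrightarrow> \<sigma> i \<le> \<sigma> 2"
proof -
  assume i: "2 \<le> i" "i \<le> m"
  have "i \<le> m \<longrightarrow> \<sigma> i \<le> \<sigma> 2"
    using i(1)
  proof (induction rule: dec_induct)
    case base then show ?case by simp
  next
    case (step n)
    then show ?case using sigmono by force
  qed
  then show ?thesis using i by simp
qed

lemma sum_split: "(\<Sum>i\<in>{1..m}. f i) = f 1 + (\<Sum>i\<in>{2..m}. f i)"
  using m2 by (simp add: sum.atLeast_Suc_atMost numeral_2_eq_2)

lemma V_Suc: "V (Suc j) = (if even j then 1 else -1) *\<^sub>R (S *v V j)"
  unfolding V_def S_vc vc_scale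
  by (rule arg_cong2[where f=vc]) (auto simp: Ac_def Bc_def fun_eq_iff)

lemma V_norm2: "(norm (V j))^2 = 4 * (\<Sum>i\<in>{1..m}. \<sigma> i ^ (2*j) * w i)"
  unfolding V_def vc_norm2 sum_distrib_left
  by (rule sum.cong) (auto simp: Ac_def Bc_def w_def power_mult_distrib power_mult algebra_simps)

lemma V_norm2': "(norm (V j))^2 = 4 * (\<sigma> 1 ^ (2*j) * w 1 + X j)"
  unfolding V_norm2 X_def by (subst sum_split) simp

lemma V_nz: "norm (V j) > 0"
proof -
  have "(norm (V j))^2 > 0" unfolding V_norm2'
    using w1_pos sig1_pos by (auto intro!: add_pos_nonneg sum_nonneg mult_nonneg_nonneg simp: X_def w_nonneg)
  then show ?thesis by simp
qed

lemma uv11: "u 1 \<bullet> u 1 = 1" "v 1 \<bullet> v 1 = 1" "u 1 \<bullet> v 1 = 0" "v 1 \<bullet> u 1 = 0"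
  using orth_uu orth_vv orth_uv m2 by (auto simp: inner_commute)

lemma uv11': "u (Suc 0) \<bullet> u (Suc 0) = 1" "v (Suc 0) \<bullet> v (Suc 0) = 1" "u (Suc 0) \<bullet> v (Suc 0) = 0" "v (Suc 0) \<bullet> u (Suc 0) = 0"
  using uv11 by simp_all

lemma norm_ye: "norm ye = 1"
proof -
  have "ye \<bullet> ye = (1/r)^2 * w 1"
    unfolding ye_def by (simp add: inner_diff_left inner_diff_right uv11 uv11' w_def power2_eq_square algebra_simps)
  also have "\<dots> = 1" using r_sq r_pos w1_pos by (simp add: field_simps)
  finally show ?thesis by (simp add: norm_eq_sqrt_inner)
qed

lemma norm_yo: "norm yo = 1"
proof -
  have "yo \<bullet> yo = (1/r)^2 * w 1"
    unfolding yo_def by (simp add: inner_add_left inner_add_right uv11 uv11' w_def power2_eq_square algebra_simps)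
  also have "\<dots> = 1" using r_sq r_pos w1_pos by (simp add: field_simps)
  finally show ?thesis by (simp add: norm_eq_sqrt_inner)
qed

lemma yo_ye: "yo \<bullet> ye = 0"
  unfolding yo_def ye_def by (simp add: inner_add_left inner_diff_right uv11 uv11' algebra_simps)

lemma Su1: "S *v u 1 = - (\<sigma> 1 *\<^sub>R v 1)" using eig_u m2 by simp
lemma Sv1: "S *v v 1 = \<sigma> 1 *\<^sub>R u 1" using eig_v m2 by simp

lemma S_yo: "S *v yo = - (\<sigma> 1 *\<^sub>R ye)"
proof -
  have lin: "linear (\<lambda>x. S *v x)" by simp
  show ?thesis unfolding yo_def ye_def
    by (simp only: linear_add[OF lin] linear_scale[OF lin] Su1 Sv1) (simp add: algebra_simps)
qed

lemma S_ye: "S *v ye = \<sigma> 1 *\<^sub>R yo"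
proof -
  have lin: "linear (\<lambda>x. S *v x)" by simp
  show ?thesis unfolding yo_def ye_def
    by (simp only: linear_diff[OF lin] linear_scale[OF lin] Su1 Sv1) (simp add: algebra_simps)
qed

lemma V_ye: "even j \<Longrightarrow> V j \<bullet> ye = 2 * \<sigma> 1 ^ j * r"
proof -
  assume j: "even j"
  have 1: "1 \<in> {1..m}" using m2 by simp
  have "V j \<bullet> ye = (1/r) * (a1 1 * (u 1 \<bullet> V j) - a2 1 * (v 1 \<bullet> V j))"
    unfolding ye_def by (simp add: inner_diff_right inner_commute)
  also have "\<dots> = (1/r) * (2 * \<sigma> 1 ^ j * w 1)"
    unfolding V_def u_vc[OF 1] v_vc[OF 1] using j by (simp add: Ac_def Bc_def w_def algebra_simps power2_eq_square)
  also have "\<dots> = 2 * \<sigma> 1 ^ j * r" using r_pos r_sq by (simp add: field_simps power2_eq_square)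
  finally show ?thesis .
qed

lemma V_yo: "odd j \<Longrightarrow> V j \<bullet> yo = 2 * \<sigma> 1 ^ j * r"
proof -
  assume j: "odd j"
  have 1: "1 \<in> {1..m}" using m2 by simp
  have "V j \<bullet> yo = (-1/r) * (a1 1 * (v 1 \<bullet> V j) + a2 1 * (u 1 \<bullet> V j))"
    unfolding yo_def by (simp add: inner_add_right inner_commute)
  also have "\<dots> = (1/r) * (2 * \<sigma> 1 ^ j * w 1)"
    unfolding V_def u_vc[OF 1] v_vc[OF 1] using j by (simp add: Ac_def Bc_def w_def algebra_simps power2_eq_square)
  also have "\<dots> = 2 * \<sigma> 1 ^ j * r" using r_pos r_sq by (simp add: field_simps power2_eq_square)
  finally show ?thesis .
qed

lemma tan_gen: "norm y = 1 \<Longrightarrow> V j \<bullet> y = 2 * \<sigma> 1 ^ j * r \<Longrightarrow> tan (vangle (V j) y) = T j"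
proof -
  assume y: "norm y = 1" and d: "V j \<bullet> y = 2 * \<sigma> 1 ^ j * r"
  have dp: "2 * \<sigma> 1 ^ j * r > 0" using sig1_pos r_pos by simp
  have "tan (vangle (V j) y) = sqrt ((norm (V j))^2 - (2 * \<sigma> 1 ^ j * r)^2) / (2 * \<sigma> 1 ^ j * r)"
    by (rule tan_vangle[OF y d dp])
  also have "(norm (V j))^2 - (2 * \<sigma> 1 ^ j * r)^2 = 4 * X j"
    unfolding V_norm2' using r_sq by (simp add: power_mult_distrib power_mult algebra_simps)
  also have "sqrt (4 * X j) = 2 * sqrt (X j)" by (simp add: real_sqrt_mult)
  finally show ?thesis unfolding T_def using dp by simp
qed

lemma tan_even: "even j \<Longrightarrow> tan (vangle (V j) ye) = T j"
  using tan_gen norm_ye V_ye by blast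
lemma tan_odd: "odd j \<Longrightarrow> tan (vangle (V j) yo) = T j"
  using tan_gen norm_yo V_yo by blast


end


context sspl2 begin
lemma T_nonneg: "T j \<ge> 0"
  unfolding T_def X_def using sig1_pos r_pos by (auto intro!: divide_nonneg_pos sum_nonneg simp: w_nonneg)
lemma X_mono: "X (p + d) \<le> \<sigma> 2 ^ (2*d) * X p"
  unfolding X_def sum_distrib_left
proof (rule sum_mono)
  fix i assume i: "i \<in> {2..m}"
  have s: "0 < \<sigma> i" "\<sigma> i \<le> \<sigma> 2" using sigpos sig_le2 i by auto
  have "\<sigma> i ^ (2*d) \<le> \<sigma> 2 ^ (2*d)" using s by (intro power_mono) auto
  hence "\<sigma> i ^ (2*d) * (\<sigma> i ^ (2*p) * w i) \<le> \<sigma> 2 ^ (2*d) * (\<sigma> i ^ (2*p) * w i)"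
    using s w_nonneg by (intro mult_right_mono) auto
  then show "\<sigma> i ^ (2 * (p + d)) * w i \<le> \<sigma> 2 ^ (2 * d) * (\<sigma> i ^ (2 * p) * w i)"
    by (simp add: power_add algebra_simps)
qed

lemma T_mono: "T (p + d) \<le> (\<sigma> 2 / \<sigma> 1) ^ d * T p"
proof -
  have "sqrt (X (p + d)) \<le> sqrt (\<sigma> 2 ^ (2*d) * X p)" using X_mono by simp
  also have "\<sigma> 2 ^ (2*d) = (\<sigma> 2 ^ d)^2" by (simp add: power_mult[symmetric] mult.commute)
  also have "sqrt ((\<sigma> 2 ^ d)^2 * X p) = \<sigma> 2 ^ d * sqrt (X p)" using sig2_pos
    by (simp add: real_sqrt_mult)
  finally have 1: "sqrt (X (p + d)) \<le> \<sigma> 2 ^ d * sqrt (X p)" .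
  have pos: "\<sigma> 1 ^ (p+d) * r > 0" using sig1_pos r_pos by simp
  have "T (p + d) \<le> \<sigma> 2 ^ d * sqrt (X p) / (\<sigma> 1 ^ (p+d) * r)"
    unfolding T_def using 1 pos by (intro divide_right_mono) auto
  also have "\<dots> = (\<sigma> 2 / \<sigma> 1) ^ d * T p"
    unfolding T_def using sig1_pos r_pos by (simp add: power_divide power_add field_simps)
  finally show ?thesis .
qed

lemma ssp_V:
  assumes "q0 = V 0" "norm q0 = 1"
  shows "ssp S q0 j = (1 / norm (V j)) *\<^sub>R V j"
proof (induction j)
  case 0 then show ?case using assms by simp
next
  case (Suc j)
  define n where "n = norm (V j)"
  define y where "y = S *v V j"
  have n: "n > 0" using V_nz n_def by simp
  have "S *v ssp S q0 j = (1/n) *\<^sub>R y" unfolding Suc y_def n_def by (simp add: matrix_vector_mult_scaleR)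
  moreover have "norm (V (Suc j)) = norm y" unfolding V_Suc y_def by simp
  ultimately have nV: "norm (V (Suc j)) = norm y" and e1: "ssp S q0 (Suc j) = (if even j then 1 else -1) *\<^sub>R ((1 / norm ((1/n) *\<^sub>R y)) *\<^sub>R ((1/n) *\<^sub>R y))"
    by simp_all
  have e2: "(1 / norm ((1/n) *\<^sub>R y)) *\<^sub>R ((1/n) *\<^sub>R y) = (1 / norm y) *\<^sub>R y"
    using n by (cases "y = 0") (simp_all add: field_simps)
  show ?case unfolding e1 e2 nV unfolding V_Suc y_def[symmetric] by simp
qed

lemma neg_mv: "(- A) *v x = - (A *v (x::real^'n))"
  by (simp add: vec_eq_iff matrix_vector_mult_def sum_negf)

lemma mv_neg: "A *v (- x) = - (A *v (x::real^'n))"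
  by (simp add: vec_eq_iff matrix_vector_mult_def sum_negf)

lemma rho_V:
  assumes skew: "transpose S = - S" and "q0 = V 0" "norm q0 = 1"
  shows "ssp_rho S q0 k = norm (V (2*k+2)) / norm (V (2*k+1))"
proof -
  define q where "q = ssp S q0 (2*k+1)"
  have key: "q \<bullet> (S *v z) = - ((S *v q) \<bullet> z)" for z
    by (metis dot_lmul_matrix transpose_matrix_vector skew neg_mv inner_minus_left)
  have s2: "ssp S q0 (2*k+2) = - ((1 / norm (S *v q)) *\<^sub>R (S *v q))"
    using ssp.simps(2)[of S q0 "2*k+1"] unfolding q_def by simp
  have "ssp_rho S q0 k = - (1 / norm (S *v q)) * (q \<bullet> (S *v (S *v q)))"
    unfolding ssp_rho_def q_def[symmetric] s2 by (simp add: matrix_vector_mult_scaleR mv_neg)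
  also have "\<dots> = norm (S *v q)"
    unfolding key by (simp add: power2_norm_eq_inner[symmetric] power2_eq_square)
  also have "S *v q = (1 / norm (V (2*k+1))) *\<^sub>R (S *v V (2*k+1))"
    unfolding q_def ssp_V[OF assms(2,3)] by (simp add: matrix_vector_mult_scaleR)
  also have "norm (S *v V (2*k+1)) = norm (V (2*k+2))"
    using V_Suc[of "2*k+1"] by simp
  hence "norm ((1 / norm (V (2*k+1))) *\<^sub>R (S *v V (2*k+1))) = norm (V (2*k+2)) / norm (V (2*k+1))"
    by simp
  finally show ?thesis .
qed

end
lemma rho_abs:
  fixes \<sigma> a X Y \<rho> :: real
  assumes s: "\<sigma> > 0" and a: "a > 0" and X: "X \<ge> 0" and Y: "0 \<le> Y" "Y \<le> \<sigma>^2 * X"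
    and r0: "\<rho> \<ge> 0" and r2: "\<rho>^2 = (\<sigma>^2 * a + Y) / (a + X)"
  shows "\<bar>\<rho> - \<sigma>\<bar> \<le> 1/2 * (X / a) * \<sigma>"
proof -
  have ax: "a + X > 0" using a X by simp
  have "\<rho>^2 \<le> \<sigma>^2" unfolding r2 using ax Y by (simp add: divide_le_eq algebra_simps)
  hence le: "\<rho> \<le> \<sigma>" using s power2_le_imp_le[of \<rho> \<sigma>] by simp
  define t where "t = X / a"
  have t0: "t \<ge> 0" using X a by (simp add: t_def)
  have "\<sigma> - \<rho> \<le> 1/2 * t * \<sigma>"
  proof (cases "t \<ge> 2")
    case True
    then have "\<sigma> \<le> 1/2 * t * \<sigma>" using s by (simp add: mult_le_cancel_right1)
    then show ?thesis using r0 by linarith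
  next
    case False
    define z where "z = \<sigma> * (1 - t/2)"
    have z0: "z \<ge> 0" using False s by (simp add: z_def)
    have poly: "(1 - t/2)^2 * (1 + t) \<le> 1"
    proof -
      have "(1 - t/2)^2 * (1 + t) = 1 - t^2 * (3 - t) / 4" by (simp add: power2_eq_square field_simps)
      moreover have "t^2 * (3 - t) \<ge> 0" using False by (intro mult_nonneg_nonneg) auto
      ultimately show ?thesis by simp
    qed
    have h: "(1 - t/2)^2 \<le> 1 / (1 + t)" using poly t0 by (simp add: pos_le_divide_eq)
    have "z^2 = \<sigma>^2 * (1 - t/2)^2" by (simp add: z_def power_mult_distrib)
    also have "\<dots> \<le> \<sigma>^2 * (1 / (1 + t))" using h by (rule mult_left_mono) simp
    also have "\<dots> = \<sigma>^2 / (1 + t)" by simp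
    also have "\<sigma>^2 / (1 + t) = \<sigma>^2 * a / (a + X)" using a by (simp add: t_def field_simps)
    also have "\<dots> \<le> \<rho>^2" unfolding r2 using ax Y by (simp add: divide_right_mono)
    finally have "z^2 \<le> \<rho>^2" .
    hence "z \<le> \<rho>" using r0 power2_le_imp_le[of z \<rho>] by simp
    then show ?thesis unfolding z_def by (simp add: algebra_simps)
  qed
  then show ?thesis using le by (simp add: t_def)
qed

lemma cmat_cvec: "cmat S *v cvec x y = cvec (S *v x) (S *v y)"
  by (simp add: vec_eq_iff matrix_vector_mult_def cmat_def cvec_def complex_eq_iff Re_sum Im_sum)

lemma cmat_scale: "cmat S *v (c *s z) = c *s (cmat S *v z)"
  by (simp add: vec_eq_iff matrix_vector_mult_def sum_distrib_left algebra_simps)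

lemma norm2_vec: "(norm (z :: 'a::real_normed_vector ^'n))^2 = (\<Sum>i\<in>UNIV. (norm (z$i))^2)"
  unfolding norm_vec_def L2_set_def by (simp add: sum_nonneg)

lemma norm_half_cvec:
  assumes "norm x = 1" "norm y = 1"
  shows "norm (complex_of_real (sqrt 2 / 2) *s cvec x y) = 1"
proof -
  have "(norm (complex_of_real (sqrt 2 / 2) *s cvec x y))^2 = 1/2 * ((norm x)^2 + (norm y)^2)"
    unfolding norm2_vec sum_distrib_left sum.distrib[symmetric]
    by (rule sum.cong) (auto simp: cvec_def norm_mult power_divide power_mult_distrib cmod_power2)
  then have "(norm (complex_of_real (sqrt 2 / 2) *s cvec x y))^2 = 1" using assms by simp
  then have "norm (complex_of_real (sqrt 2 / 2) *s cvec x y) = 1 \<or> norm (complex_of_real (sqrt 2 / 2) *s cvec x y) = -1"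
    by (simp only: power2_eq_1_iff)
  then show ?thesis using norm_ge_zero[of "complex_of_real (sqrt 2 / 2) *s cvec x y"] by linarith
qed


lemma mv_neg2: "A *v (- x) = - (A *v (x::real^'n))"
  by (simp add: vec_eq_iff matrix_vector_mult_def sum_negf)

lemma eig_pair:
  assumes "S *v x = - (s *\<^sub>R y)" "S *v y = s *\<^sub>R x"
  shows "cmat S *v (c *s cvec x y) = (\<i> * complex_of_real s) *s (c *s cvec x y)"
    and "cmat S *v (c *s cvec x (- y)) = (- \<i> * complex_of_real s) *s (c *s cvec x (- y))"
  unfolding cmat_scale cmat_cvec mv_neg2 assms
  by (simp_all add: vec_eq_iff cvec_def complex_eq_iff algebra_simps)

context sspl2 begin

lemma X_nonneg: "X j \<ge> 0"
  unfolding X_def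
proof (rule sum_nonneg)
  fix i
  have "\<sigma> i ^ (2*j) = (\<sigma> i ^ 2) ^ j" by (simp add: power_mult)
  also have "\<dots> \<ge> 0" by simp
  finally show "0 \<le> \<sigma> i ^ (2 * j) * w i" using w_nonneg by simp
qed

lemma main_bounds:
  assumes skew: "transpose S = - S" and q0: "q0 = V 0" "norm q0 = 1"
  shows "\<And>j. even j \<Longrightarrow> tan (vangle (ssp S q0 j) ye) = T j"
    and "\<And>j. odd j \<Longrightarrow> tan (vangle (ssp S q0 j) yo) = T j"
    and "tan (vangle q0 ye) = T 0"
    and "tan (vangle (S *v q0) yo) = T 1"
    and "\<And>k. \<bar>ssp_rho S q0 k - \<sigma> 1\<bar> \<le> 1/2 * (T (2*k+1))^2 * \<sigma> 1"
proof -
  have vs: "vangle (ssp S q0 j) y = vangle (V j) y" for j y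
    unfolding ssp_V[OF q0] using V_nz by (intro vangle_scale) simp
  show "\<And>j. even j \<Longrightarrow> tan (vangle (ssp S q0 j) ye) = T j" using vs tan_even by simp
  show "\<And>j. odd j \<Longrightarrow> tan (vangle (ssp S q0 j) yo) = T j" using vs tan_odd by simp
  show "tan (vangle q0 ye) = T 0" using q0 tan_even[of 0] by simp
  have "V 1 = S *v q0" using V_Suc[of 0] q0 by simp
  then show "tan (vangle (S *v q0) yo) = T 1" using tan_odd[of 1] by simp
  fix k :: nat
  define p where "p = 2*k+1"
  define a where "a = \<sigma> 1 ^ (2*p) * w 1"
  have a: "a > 0" using sig1_pos w1_pos by (simp add: a_def)
  have X0: "X p \<ge> 0" by (rule X_nonneg)
  have Y0: "X (p+1) \<ge> 0" by (rule X_nonneg)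
  have "X (p+1) \<le> \<sigma> 2 ^ 2 * X p" using X_mono[of p 1] by simp
  also have "\<dots> \<le> \<sigma> 1 ^ 2 * X p" using X0 sig12 sig2_pos
    by (intro mult_right_mono power_mono) auto
  finally have Y: "X (p+1) \<le> \<sigma> 1 ^ 2 * X p" .
  have rho: "ssp_rho S q0 k = norm (V (p+1)) / norm (V p)"
    using rho_V[OF skew q0, of k] by (simp add: p_def)
  have "(ssp_rho S q0 k)^2 = (norm (V (p+1)))^2 / (norm (V p))^2"
    unfolding rho by (simp add: power_divide)
  also have "\<dots> = (4 * (\<sigma> 1 ^ 2 * a + X (p+1))) / (4 * (a + X p))"
    unfolding V_norm2' a_def by (simp add: power_add power_mult algebra_simps power2_eq_square)
  also have "\<dots> = (\<sigma> 1 ^ 2 * a + X (p+1)) / (a + X p)"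
    by (rule mult_divide_mult_cancel_left) simp
  finally have r2: "(ssp_rho S q0 k)^2 = (\<sigma> 1 ^ 2 * a + X (p+1)) / (a + X p)" .
  have r0: "ssp_rho S q0 k \<ge> 0" unfolding rho by simp
  have "\<bar>ssp_rho S q0 k - \<sigma> 1\<bar> \<le> 1/2 * (X p / a) * \<sigma> 1"
    by (rule rho_abs[OF sig1_pos a X0 Y0 Y r0 r2])
  also have "X p / a = (T p)^2"
    unfolding T_def a_def using X0 r_sq by (simp add: power_divide power_mult_distrib power_mult mult.commute)
  finally show "\<bar>ssp_rho S q0 k - \<sigma> 1\<bar> \<le> 1/2 * (T (2*k+1))^2 * \<sigma> 1" by (simp add: p_def)
qed

end

theorem theorem3p3:
  fixes S :: "real^'n^'n" and m :: nat
    and \<sigma> a1 a2 :: "nat \<Rightarrow> real" and u v :: "nat \<Rightarrow> real^'n" and q0 :: "real^'n"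
    and xo xe :: "real^'n"
  assumes dim: "CARD('n) = 2 * m" and m2: "2 \<le> m"
    and skew: "transpose S = - S" and nonsing: "invertible S"
    and sig12: "\<sigma> 2 < \<sigma> 1"
    and sigmono: "\<forall>j. 2 \<le> j \<and> j < m \<longrightarrow> \<sigma> (j+1) \<le> \<sigma> j"
    and sigpos: "\<forall>j\<in>{1..m}. 0 < \<sigma> j"
    and orth_uu: "\<forall>i\<in>{1..m}. \<forall>j\<in>{1..m}. u i \<bullet> u j = (if i = j then 1 else 0)"
    and orth_vv: "\<forall>i\<in>{1..m}. \<forall>j\<in>{1..m}. v i \<bullet> v j = (if i = j then 1 else 0)"
    and orth_uv: "\<forall>i\<in>{1..m}. \<forall>j\<in>{1..m}. u i \<bullet> v j = 0"
    and eig_v: "\<forall>j\<in>{1..m}. S *v v j = \<sigma> j *\<^sub>R u j"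
    and eig_u: "\<forall>j\<in>{1..m}. S *v u j = - (\<sigma> j *\<^sub>R v j)"
    and q0_unit: "norm q0 = 1"
    and q0_expand: "q0 = 2 *\<^sub>R (\<Sum>i\<in>{1..m}. a1 i *\<^sub>R u i - a2 i *\<^sub>R v i)"
    and alpha1: "(a1 1, a2 1) \<noteq> (0, 0)"
    and xo_def: "xo = (-1 / sqrt (a1 1 ^ 2 + a2 1 ^ 2)) *\<^sub>R (a1 1 *\<^sub>R v 1 + a2 1 *\<^sub>R u 1)"
    and xe_def: "xe = (1 / sqrt (a1 1 ^ 2 + a2 1 ^ 2)) *\<^sub>R (a1 1 *\<^sub>R u 1 - a2 1 *\<^sub>R v 1)"
  shows "norm xo = 1 \<and> norm xe = 1 \<and> xo \<bullet> xe = 0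
    \<and> norm ((complex_of_real (sqrt 2 / 2)) *s cvec xo xe) = 1
    \<and> cmat S *v ((complex_of_real (sqrt 2 / 2)) *s cvec xo xe)
        = (\<i> * complex_of_real (\<sigma> 1)) *s ((complex_of_real (sqrt 2 / 2)) *s cvec xo xe)
    \<and> norm ((complex_of_real (sqrt 2 / 2)) *s cvec xo (- xe)) = 1
    \<and> cmat S *v ((complex_of_real (sqrt 2 / 2)) *s cvec xo (- xe))
        = (- \<i> * complex_of_real (\<sigma> 1)) *s ((complex_of_real (sqrt 2 / 2)) *s cvec xo (- xe))
    \<and> (\<forall>k\<ge>1. \<bar>tan (vangle (ssp S q0 (2*k)) xe)\<bar>
          \<le> (\<sigma> 2 / \<sigma> 1) ^ (2*k) * \<bar>tan (vangle q0 xe)\<bar>)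
    \<and> (\<forall>k\<ge>1. \<bar>tan (vangle (ssp S q0 (2*k-1)) xo)\<bar>
          \<le> (\<sigma> 2 / \<sigma> 1) ^ (2*(k-1)) * \<bar>tan (vangle (S *v q0) xo)\<bar>)
    \<and> (\<forall>k\<ge>1. \<bar>tan (vangle (ssp S q0 (2*k-1)) xo)\<bar>
          \<le> (\<sigma> 2 / \<sigma> 1) ^ (2*k-1) * \<bar>tan (vangle q0 xe)\<bar>)
    \<and> (\<exists>g. g \<in> O(\<lambda>k. (tan (vangle (ssp S q0 (2*k+1)) xo)) ^ 4)
          \<and> (\<forall>k. \<bar>ssp_rho S q0 k - \<sigma> 1\<bar>
                 \<le> 1/2 * (tan (vangle (ssp S q0 (2*k+1)) xo)) ^ 2 * \<sigma> 1 + g k))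
    \<and> (\<lambda>k. ssp_rho S q0 k - \<sigma> 1) \<in> O(\<lambda>k. (\<sigma> 2 / \<sigma> 1) ^ (4*k))"
proof -
  interpret sspl2 S m \<sigma> u v a1 a2
    using orth_uu orth_vv orth_uv eig_v eig_u m2 sig12 sigmono sigpos alpha1
    by unfold_locales auto
  have exo: "xo = yo" unfolding xo_def yo_def r_def w_def ..
  have exe: "xe = ye" unfolding xe_def ye_def r_def w_def ..
  have q0V: "q0 = V 0"
    unfolding q0_expand V_def vc_def scaleR_sum_right
    by (rule sum.cong) (auto simp: Ac_def Bc_def algebra_simps)
  note MB = main_bounds[OF skew q0V q0_unit]
  have part1: "norm xo = 1 \<and> norm xe = 1 \<and> xo \<bullet> xe = 0
    \<and> norm ((complex_of_real (sqrt 2 / 2)) *s cvec xo xe) = 1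
    \<and> cmat S *v ((complex_of_real (sqrt 2 / 2)) *s cvec xo xe)
        = (\<i> * complex_of_real (\<sigma> 1)) *s ((complex_of_real (sqrt 2 / 2)) *s cvec xo xe)
    \<and> norm ((complex_of_real (sqrt 2 / 2)) *s cvec xo (- xe)) = 1
    \<and> cmat S *v ((complex_of_real (sqrt 2 / 2)) *s cvec xo (- xe))
        = (- \<i> * complex_of_real (\<sigma> 1)) *s ((complex_of_real (sqrt 2 / 2)) *s cvec xo (- xe))"
    unfolding exo exe
    using norm_yo norm_ye yo_ye norm_half_cvec[of yo ye] norm_half_cvec[of yo "- ye"]
      eig_pair[OF S_yo S_ye] by simp
  have T0: "\<bar>T j\<bar> = T j" for j using T_nonneg by simp
  have b1: "\<forall>k\<ge>1. \<bar>tan (vangle (ssp S q0 (2*k)) xe)\<bar>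
          \<le> (\<sigma> 2 / \<sigma> 1) ^ (2*k) * \<bar>tan (vangle q0 xe)\<bar>"
    unfolding exe using MB(1,3) T_mono[of 0 "2*_"] T0 by simp
  have b2: "\<forall>k\<ge>1. \<bar>tan (vangle (ssp S q0 (2*k-1)) xo)\<bar>
          \<le> (\<sigma> 2 / \<sigma> 1) ^ (2*(k-1)) * \<bar>tan (vangle (S *v q0) xo)\<bar>"
  proof (intro allI impI)
    fix k :: nat assume k: "k \<ge> 1"
    have o: "odd (2*k-1)" using k by presburger
    have e: "2*k-1 = 1 + 2*(k-1)" using k by simp
    show "\<bar>tan (vangle (ssp S q0 (2*k-1)) xo)\<bar>
          \<le> (\<sigma> 2 / \<sigma> 1) ^ (2*(k-1)) * \<bar>tan (vangle (S *v q0) xo)\<bar>"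
      unfolding exo MB(2)[OF o] MB(4) T0 using T_mono[of 1 "2*(k-1)"] e by simp
  qed
  have b3: "\<forall>k\<ge>1. \<bar>tan (vangle (ssp S q0 (2*k-1)) xo)\<bar>
          \<le> (\<sigma> 2 / \<sigma> 1) ^ (2*k-1) * \<bar>tan (vangle q0 xe)\<bar>"
  proof (intro allI impI)
    fix k :: nat assume k: "k \<ge> 1"
    have o: "odd (2*k-1)" using k by presburger
    show "\<bar>tan (vangle (ssp S q0 (2*k-1)) xo)\<bar>
          \<le> (\<sigma> 2 / \<sigma> 1) ^ (2*k-1) * \<bar>tan (vangle q0 xe)\<bar>"
      unfolding exo exe MB(2)[OF o] MB(3) T0 using T_mono[of 0 "2*k-1"] by simp
  qed
  have tq: "tan (vangle (ssp S q0 (2*k+1)) xo) = T (2*k+1)" for k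
    unfolding exo by (rule MB(2)) simp
  have b4: "\<exists>g. g \<in> O(\<lambda>k. (tan (vangle (ssp S q0 (2*k+1)) xo)) ^ 4)
          \<and> (\<forall>k. \<bar>ssp_rho S q0 k - \<sigma> 1\<bar>
                 \<le> 1/2 * (tan (vangle (ssp S q0 (2*k+1)) xo)) ^ 2 * \<sigma> 1 + g k)"
  proof (rule exI[of _ "\<lambda>_. 0"], rule conjI)
    show "(\<lambda>_. 0::real) \<in> O(\<lambda>k. (tan (vangle (ssp S q0 (2*k+1)) xo)) ^ 4)" by simp
    show "\<forall>k. \<bar>ssp_rho S q0 k - \<sigma> 1\<bar>
                 \<le> 1/2 * (tan (vangle (ssp S q0 (2*k+1)) xo)) ^ 2 * \<sigma> 1 + 0"
      unfolding tq using MB(5) by simp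
  qed
  define q where "q = \<sigma> 2 / \<sigma> 1"
  have q0': "q > 0" using sig1_pos sig2_pos by (simp add: q_def)
  have b5: "(\<lambda>k. ssp_rho S q0 k - \<sigma> 1) \<in> O(\<lambda>k. q ^ (4*k))"
  proof (rule bigoI)
    show "\<forall>\<^sub>F k in at_top. norm (ssp_rho S q0 k - \<sigma> 1) \<le> (1/2 * (q * T 0)^2 * \<sigma> 1) * norm (q ^ (4*k))"
    proof (rule always_eventually, rule allI)
      fix k :: nat
      have "norm (ssp_rho S q0 k - \<sigma> 1) \<le> 1/2 * (T (2*k+1))^2 * \<sigma> 1" using MB(5) by simp
      also have "T (2*k+1) \<le> q ^ (2*k+1) * T 0" using T_mono[of 0 "2*k+1"] by (simp add: q_def)
      hence "(T (2*k+1))^2 \<le> (q ^ (2*k+1) * T 0)^2" using T_nonneg by (intro power_mono) auto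
      hence "1/2 * (T (2*k+1))^2 * \<sigma> 1 \<le> 1/2 * (q ^ (2*k+1) * T 0)^2 * \<sigma> 1"
        using sig1_pos by simp
      also have "(q ^ (2*k+1) * T 0)^2 = (q * T 0)^2 * q ^ (4*k)"
        by (simp add: power_mult_distrib power_add power_mult[symmetric] mult_ac)
      finally show "norm (ssp_rho S q0 k - \<sigma> 1) \<le> (1/2 * (q * T 0)^2 * \<sigma> 1) * norm (q ^ (4*k))"
        using q0' by (simp add: mult_ac)
    qed
  qed
  show ?thesis using part1 b1 b2 b3 b4 b5 unfolding q_def by blast
qed

end
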